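(* Let $X$ be a quasi-Polish space and $E$ an equivalence relation on $X$ such that the $E$-saturation of every open set $U\subseteq X$ is open. Define $x\preccurlyeq_E y$ iff $x\in\overline{[y]_E}$, and $x\approx_E y$ iff $x\preccurlyeq_E y$ and $y\preccurlyeq_E x$. Then the $T_0$-quotient $X/\!/E$ of the quotient space $X/E$ is a quasi-Polish space; the projection $p:X\to X/\!/E$ is continuous and open with kernel $x\approx_E y\iff\overline{[x]_E}=\overline{[y]_E}$ (so $X/\!/E$ may be identified with $X/{\approx_E}$); the specialization order of $X/\!/E$ is given by $[x]_{\approx_E}\le[y]_{\approx_E}\iff x\in\overline{[y]_E}$; and $p$ has a Borel section, i.e. $\approx_E$ has a Borel selector.
   Context: A quasi-Polish space is a topological space homeomorphic to a $\mathbf\Pi^0_2$ subset of $\mathbb S^{\mathbb N}$, where $\mathbb S=\{0<1\}$ is the Sierpiński space ($\{1\}$ open, $\{0\}$ not open), and $\mathbf\Pi^0_2$ means a countable intersection of sets of the form $U\cup F$ with $U$ open and $F$ closed. The specialization preorder of a space is $x\lesssim y\iff x\in\overline{\{y\}}$; the $T_0$-quotient identifies points with the same closure (i.e. equivalent under the symmetric part of this preorder), with the quotient topology. Quasi-Polish spaces carry a standard Borel structure. *)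

theory Defs
  imports "HOL-Analysis.Analysis"
begin

definition sierpinski_space :: "bool topology" where
  "sierpinski_space = topology (\<lambda>U. U = {} \<or> U = {True} \<or> U = UNIV)"

definition Pi02_in :: "'a topology \<Rightarrow> 'a set \<Rightarrow> bool" where
  "Pi02_in X A \<longleftrightarrow> (\<exists>U F :: nat \<Rightarrow> 'a set.
      (\<forall>n. openin X (U n) \<and> closedin X (F n)) \<and> A = topspace X \<inter> (\<Inter>n. U n \<union> F n))"

definition quasi_Polish :: "'a topology \<Rightarrow> bool" where
  "quasi_Polish X \<longleftrightarrow>
     (\<exists>A. Pi02_in (product_topology (\<lambda>_::nat. sierpinski_space) UNIV) A \<and>
          X homeomorphic_space subtopology (product_topology (\<lambda>_::nat. sierpinski_space) UNIV) A)"

definition quotient_topology :: "'a topology \<Rightarrow> ('a \<Rightarrow> 'b) \<Rightarrow> 'b topology" where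
  "quotient_topology X f =
     topology (\<lambda>U. U \<subseteq> f ` topspace X \<and> openin X {x \<in> topspace X. f x \<in> U})"

definition spec_le :: "'a topology \<Rightarrow> 'a \<Rightarrow> 'a \<Rightarrow> bool" where
  "spec_le X x y \<longleftrightarrow> x \<in> topspace X \<and> y \<in> topspace X \<and> x \<in> X closure_of {y}"

definition t0_class :: "'a topology \<Rightarrow> 'a \<Rightarrow> 'a set" where
  "t0_class X x = {y \<in> topspace X. X closure_of {y} = X closure_of {x}}"

definition t0_quotient :: "'a topology \<Rightarrow> 'a set topology" where
  "t0_quotient X = quotient_topology X (t0_class X)"

definition equiv_quotient_space :: "'a topology \<Rightarrow> 'a rel \<Rightarrow> 'a set topology" where
  "equiv_quotient_space X E = quotient_topology X (\<lambda>x. E `` {x})"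

definition t0_equiv_quotient :: "'a topology \<Rightarrow> 'a rel \<Rightarrow> 'a set set topology" where
  "t0_equiv_quotient X E = t0_quotient (equiv_quotient_space X E)"

definition t0_equiv_proj :: "'a topology \<Rightarrow> 'a rel \<Rightarrow> 'a \<Rightarrow> 'a set set" where
  "t0_equiv_proj X E x = t0_class (equiv_quotient_space X E) (E `` {x})"

definition borel_of_top :: "'a topology \<Rightarrow> 'a measure" where
  "borel_of_top X = sigma (topspace X) {U. openin X U}"

end

theory Submission
  imports Defs "HOL-Library.Nat_Bijection"
begin


lemma istop_sierp: "istopology (\<lambda>U::bool set. U = {} \<or> U = {True} \<or> U = UNIV)"
  unfolding istopology_def
proof (intro conjI allI impI)
  fix S T :: "bool set"
  assume "S = {} \<or> S = {True} \<or> S = UNIV" "T = {} \<or> T = {True} \<or> T = UNIV"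
  then show "S \<inter> T = {} \<or> S \<inter> T = {True} \<or> S \<inter> T = UNIV" by auto
next
  fix K :: "bool set set"
  assume K: "\<forall>S\<in>K. S = {} \<or> S = {True} \<or> S = UNIV"
  show "\<Union>K = {} \<or> \<Union>K = {True} \<or> \<Union>K = UNIV"
  proof (cases "UNIV \<in> K")
    case True then show ?thesis by auto
  next
    case False
    then have "\<Union>K \<subseteq> {True}" using K by auto
    then show ?thesis by (metis subset_singletonD)
  qed
qed

lemma openin_sierp: "openin sierpinski_space U \<longleftrightarrow> U = {} \<or> U = {True} \<or> U = UNIV"
  unfolding sierpinski_space_def by (simp add: topology_inverse'[OF istop_sierp])

lemma topspace_sierp [simp]: "topspace sierpinski_space = UNIV"
  unfolding topspace_def openin_sierp by auto

abbreviation SN :: "(nat \<Rightarrow> bool) topology" where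
  "SN \<equiv> product_topology (\<lambda>_::nat. sierpinski_space) UNIV"

lemma topspace_SN [simp]: "topspace SN = UNIV"
  by (auto simp: topspace_product_topology PiE_def extensional_def)

definition BB :: "nat list \<Rightarrow> (nat \<Rightarrow> bool) set" where
  "BB L = {x. \<forall>m\<in>set L. x m}"

lemma openin_BB: "openin SN (BB L)"
  unfolding openin_product_topology_alt
proof (intro ballI)
  fix x assume x: "x \<in> BB L"
  define U where "U i = (if i \<in> set L then {True} else (UNIV::bool set))" for i
  have "{i \<in> UNIV. U i \<noteq> topspace sierpinski_space} \<subseteq> set L" by (auto simp: U_def)
  then have "finite {i \<in> UNIV. U i \<noteq> topspace sierpinski_space}" using finite_subset by blast
  moreover have "\<forall>i\<in>UNIV. openin sierpinski_space (U i)" by (auto simp: U_def openin_sierp)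
  moreover have "x \<in> Pi\<^sub>E UNIV U" using x by (auto simp: U_def BB_def)
  moreover have "Pi\<^sub>E UNIV U \<subseteq> BB L" by (auto simp: U_def BB_def PiE_def Pi_def)
  ultimately show "\<exists>U. finite {i \<in> UNIV. U i \<noteq> topspace sierpinski_space} \<and>
              (\<forall>i\<in>UNIV. openin sierpinski_space (U i)) \<and> x \<in> Pi\<^sub>E UNIV U \<and> Pi\<^sub>E UNIV U \<subseteq> BB L"
    by blast
qed

lemma openin_SN_basic:
  assumes "openin SN W" "x \<in> W"
  shows "\<exists>K. x \<in> BB K \<and> BB K \<subseteq> W"
proof -
  obtain U where fin: "finite {i \<in> UNIV. U i \<noteq> topspace sierpinski_space}"
    and op: "\<forall>i\<in>UNIV. openin sierpinski_space (U i)" and xU: "x \<in> Pi\<^sub>E UNIV U"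
    and sub: "Pi\<^sub>E UNIV U \<subseteq> W"
    using assms unfolding openin_product_topology_alt by blast
  obtain K where K: "set K = {i. U i \<noteq> UNIV}" using fin finite_list by fastforce
  have "x \<in> BB K"
  proof (clarsimp simp: BB_def K)
    fix i assume "U i \<noteq> UNIV"
    then have "U i = {True} \<or> U i = {}" using op openin_sierp by blast
    moreover have "x i \<in> U i" using xU by auto
    ultimately show "x i" by auto
  qed
  moreover have "BB K \<subseteq> Pi\<^sub>E UNIV U"
  proof
    fix y assume y: "y \<in> BB K"
    have "y i \<in> U i" for i
    proof (cases "U i = UNIV")
      case False
      then have "y i" using y K by (auto simp: BB_def)
      moreover have "U i = {True} \<or> U i = {}" using False op openin_sierp by blast
      moreover have "x i \<in> U i" using xU by auto
      ultimately show ?thesis by auto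
    qed auto
    then show "y \<in> Pi\<^sub>E UNIV U" by auto
  qed
  ultimately show ?thesis using sub by blast
qed

lemma openin_SN_coord: "openin SN {x. x k}"
  using openin_BB[of "[k]"] by (simp add: BB_def)

lemma closedin_SN_ncoord: "closedin SN {x. \<not> x k}"
proof -
  have "{x. \<not> x k} = topspace SN - {x. x k}" by auto
  then show ?thesis using openin_SN_coord by (metis closedin_diff closedin_topspace)
qed

lemma continuous_map_sierp:
  "continuous_map Y sierpinski_space f \<longleftrightarrow> openin Y {y \<in> topspace Y. f y}"
proof
  assume "continuous_map Y sierpinski_space f"
  then have "openin Y {y \<in> topspace Y. f y \<in> {True}}"
    using openin_continuous_map_preimage openin_sierp by blast
  then show "openin Y {y \<in> topspace Y. f y}" by simp
next
  assume o: "openin Y {y \<in> topspace Y. f y}"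
  show "continuous_map Y sierpinski_space f"
    unfolding continuous_map_def
  proof (intro conjI allI impI)
    fix U assume "openin sierpinski_space U"
    then have "U = {} \<or> U = {True} \<or> U = UNIV" using openin_sierp by blast
    then show "openin Y {x \<in> topspace Y. f x \<in> U}" using o by auto
  qed auto
qed

lemma istop_quot: "istopology (\<lambda>U. U \<subseteq> f ` topspace X \<and> openin X {x \<in> topspace X. f x \<in> U})"
  unfolding istopology_def
proof (rule conjI; intro allI impI)
  fix S T
  assume "S \<subseteq> f ` topspace X \<and> openin X {x \<in> topspace X. f x \<in> S}"
     "T \<subseteq> f ` topspace X \<and> openin X {x \<in> topspace X. f x \<in> T}"
  moreover have "{x \<in> topspace X. f x \<in> S \<inter> T} = {x \<in> topspace X. f x \<in> S} \<inter> {x \<in> topspace X. f x \<in> T}" by auto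
  ultimately show "S \<inter> T \<subseteq> f ` topspace X \<and> openin X {x \<in> topspace X. f x \<in> S \<inter> T}" by auto
next
  fix K
  assume K: "\<forall>S\<in>K. S \<subseteq> f ` topspace X \<and> openin X {x \<in> topspace X. f x \<in> S}"
  have "{x \<in> topspace X. f x \<in> \<Union>K} = (\<Union>S\<in>K. {x \<in> topspace X. f x \<in> S})" by auto
  then show "\<Union>K \<subseteq> f ` topspace X \<and> openin X {x \<in> topspace X. f x \<in> \<Union>K}"
    using K by auto
qed

lemma openin_quot: "openin (quotient_topology X f) U \<longleftrightarrow> U \<subseteq> f ` topspace X \<and> openin X {x \<in> topspace X. f x \<in> U}"
  unfolding quotient_topology_def by (simp add: topology_inverse'[OF istop_quot])

lemma topspace_quot [simp]: "topspace (quotient_topology X f) = f ` topspace X"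
proof -
  have "{x \<in> topspace X. f x \<in> f ` topspace X} = topspace X" by auto
  then have "openin (quotient_topology X f) (f ` topspace X)" by (simp add: openin_quot)
  moreover have "U \<subseteq> f ` topspace X" if "openin (quotient_topology X f) U" for U
    using that by (simp add: openin_quot)
  ultimately show ?thesis unfolding topspace_def by blast
qed



locale qsetup =
  fixes X :: "'a topology" and E :: "'a rel"
  assumes eq: "equiv (topspace X) E"
    and sat: "\<And>U. openin X U \<Longrightarrow> openin X (E `` U)"
begin

abbreviation "D \<equiv> equiv_quotient_space X E"
abbreviation "Q \<equiv> t0_equiv_quotient X E"
abbreviation "p \<equiv> t0_equiv_proj X E"
definition "R x y \<longleftrightarrow> x \<in> X closure_of (E `` {y})"

lemma E_sub: "E \<subseteq> topspace X \<times> topspace X"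
  using eq by (auto simp: equiv_def refl_on_def)
lemma E_refl: "x \<in> topspace X \<Longrightarrow> (x,x) \<in> E"
  using eq by (auto simp: equiv_def refl_on_def)
lemma E_sym: "(x,y) \<in> E \<Longrightarrow> (y,x) \<in> E"
  using eq by (auto simp: equiv_def sym_def)
lemma E_trans: "(x,y) \<in> E \<Longrightarrow> (y,z) \<in> E \<Longrightarrow> (x,z) \<in> E"
  using eq unfolding equiv_def trans_def by blast

lemma openin_D: "openin D W \<longleftrightarrow> W \<subseteq> (\<lambda>x. E``{x}) ` topspace X \<and> openin X {x \<in> topspace X. E``{x} \<in> W}"
  unfolding equiv_quotient_space_def by (rule openin_quot)

lemma topspace_D: "topspace D = (\<lambda>x. E``{x}) ` topspace X"
  unfolding equiv_quotient_space_def by simp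

lemma p_def': "p x = t0_class D (E``{x})"
  by (simp add: t0_equiv_proj_def)

lemma topspace_Q: "topspace Q = p ` topspace X"
  unfolding t0_equiv_quotient_def t0_quotient_def
  by (simp add: topspace_D image_image p_def')

lemma openin_Q: "openin Q V \<longleftrightarrow> V \<subseteq> p ` topspace X \<and> openin X {x \<in> topspace X. p x \<in> V}"
proof -
  have "openin Q V \<longleftrightarrow> V \<subseteq> t0_class D ` topspace D \<and> openin D {c \<in> topspace D. t0_class D c \<in> V}"
    unfolding t0_equiv_quotient_def t0_quotient_def by (rule openin_quot)
  moreover have "t0_class D ` topspace D = p ` topspace X"
    by (simp add: topspace_D image_image p_def')
  moreover have "openin D {c \<in> topspace D. t0_class D c \<in> V} \<longleftrightarrow> openin X {x \<in> topspace X. p x \<in> V}"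
  proof -
    have "{x \<in> topspace X. E``{x} \<in> {c \<in> topspace D. t0_class D c \<in> V}} = {x \<in> topspace X. p x \<in> V}"
      by (auto simp: topspace_D p_def')
    then show ?thesis by (auto simp: openin_D topspace_D)
  qed
  ultimately show ?thesis by simp
qed

lemma Image_iff': "y \<in> E `` U \<longleftrightarrow> (\<exists>z. (y,z) \<in> E \<and> z \<in> U)"
  using E_sym by blast

lemma R_iff:
  assumes "x \<in> topspace X"
  shows "R x y \<longleftrightarrow> (\<forall>U. openin X U \<and> x \<in> U \<longrightarrow> y \<in> E `` U)"
  unfolding R_def in_closure_of using assms Image_iff' by auto

lemma R_topspace: "R x y \<Longrightarrow> x \<in> topspace X"
  unfolding R_def using in_closure_of by fastforce

lemma cls_in_closure_D:
  assumes x: "x \<in> topspace X" and y: "y \<in> topspace X"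
  shows "E``{y} \<in> D closure_of {E``{x}} \<longleftrightarrow> R y x"
proof
  assume L: "E``{y} \<in> D closure_of {E``{x}}"
  show "R y x" unfolding R_iff[OF y]
  proof (intro allI impI)
    fix U assume U: "openin X U \<and> y \<in> U"
    define T where "T = (\<lambda>z. E``{z}) ` (E``U)"
    have pre: "{z \<in> topspace X. E``{z} \<in> T} = E``U"
    proof
      show "{z \<in> topspace X. E `` {z} \<in> T} \<subseteq> E `` U"
      proof clarify
        fix z assume z: "z \<in> topspace X" "E``{z} \<in> T"
        then obtain w where w: "w \<in> E``U" "E``{z} = E``{w}" unfolding T_def by auto
        have "(z,z) \<in> E" using E_refl z by auto
        then have "(w,z) \<in> E" using w by auto
        then show "z \<in> E``U" using w(1) E_trans by blast
      qed
      show "E `` U \<subseteq> {z \<in> topspace X. E `` {z} \<in> T}" using E_sub unfolding T_def by auto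
    qed
    have "openin D T"
      unfolding openin_D pre using sat U E_sub by (auto simp: T_def)
    moreover have "E``{y} \<in> T" using U E_refl[of y] y unfolding T_def by auto
    ultimately have "E``{x} \<in> T" using L unfolding in_closure_of by auto
    then have "x \<in> {z \<in> topspace X. E``{z} \<in> T}" using x by auto
    then show "x \<in> E``U" using pre by simp
  qed
next
  assume Ryx: "R y x"
  show "E``{y} \<in> D closure_of {E``{x}}"
    unfolding in_closure_of
  proof (intro conjI allI impI)
    show "E``{y} \<in> topspace D" using y by (simp add: topspace_D)
    fix T assume T: "E``{y} \<in> T \<and> openin D T"
    then have o: "openin X {z \<in> topspace X. E``{z} \<in> T}" by (simp add: openin_D)
    then have "x \<in> E `` {z \<in> topspace X. E``{z} \<in> T}" using Ryx T y unfolding R_iff[OF y] by auto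
    then obtain z where z: "z \<in> topspace X" "E``{z} \<in> T" "(z,x) \<in> E" by auto
    have "E``{z} = E``{x}" using z(3) E_sym E_trans by blast
    then show "\<exists>c. c \<in> {E``{x}} \<and> c \<in> T" using z by auto
  qed
qed

lemma t0_class_eq:
  assumes "c \<in> topspace Y" "d \<in> topspace Y"
  shows "t0_class Y c = t0_class Y d \<longleftrightarrow> Y closure_of {c} = Y closure_of {d}"
proof
  assume "t0_class Y c = t0_class Y d"
  moreover have "c \<in> t0_class Y c" using assms by (simp add: t0_class_def)
  ultimately show "Y closure_of {c} = Y closure_of {d}" by (simp add: t0_class_def)
qed (simp add: t0_class_def)

lemma closure_single_eq:
  assumes "c \<in> topspace Y" "d \<in> topspace Y"
  shows "Y closure_of {c} = Y closure_of {d} \<longleftrightarrow> c \<in> Y closure_of {d} \<and> d \<in> Y closure_of {c}"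
proof
  assume e: "Y closure_of {c} = Y closure_of {d}"
  have "{c} \<subseteq> Y closure_of {c}" "{d} \<subseteq> Y closure_of {d}"
    using assms closure_of_subset[of "{c}" Y] closure_of_subset[of "{d}" Y] by auto
  then have "c \<in> Y closure_of {c}" "d \<in> Y closure_of {d}" by auto
  then show "c \<in> Y closure_of {d} \<and> d \<in> Y closure_of {c}" using e by simp
next
  assume a: "c \<in> Y closure_of {d} \<and> d \<in> Y closure_of {c}"
  then have "Y closure_of {c} \<subseteq> Y closure_of {d}" "Y closure_of {d} \<subseteq> Y closure_of {c}"
    by (simp_all add: closure_of_minimal)
  then show "Y closure_of {c} = Y closure_of {d}" by blast
qed

lemma p_eq_R:
  assumes x: "x \<in> topspace X" and y: "y \<in> topspace X"
  shows "p x = p y \<longleftrightarrow> R x y \<and> R y x"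
proof -
  have cx: "E``{x} \<in> topspace D" and cy: "E``{y} \<in> topspace D" using x y by (auto simp: topspace_D)
  show ?thesis
    unfolding p_def' t0_class_eq[OF cx cy] closure_single_eq[OF cx cy]
    using cls_in_closure_D[OF x y] cls_in_closure_D[OF y x] by blast
qed

lemma R_E_left:
  assumes "R x y" "(x,x') \<in> E"
  shows "R x' y"
proof -
  have x': "x' \<in> topspace X" using assms(2) E_sub by auto
  show ?thesis unfolding R_iff[OF x']
  proof (intro allI impI)
    fix U assume U: "openin X U \<and> x' \<in> U"
    then have "openin X (E``U) \<and> x \<in> E``U" using sat assms(2) E_sym by blast
    then have "y \<in> E``(E``U)" using assms(1) R_iff R_topspace by blast
    then show "y \<in> E``U" using E_trans by blast
  qed
qed

lemma R_closure_eq: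
  assumes x: "x \<in> topspace X" and y: "y \<in> topspace X"
  shows "X closure_of (E``{x}) = X closure_of (E``{y}) \<longleftrightarrow> R x y \<and> R y x"
proof
  assume "X closure_of (E``{x}) = X closure_of (E``{y})"
  moreover have "E``{x} \<subseteq> X closure_of (E``{x})" "E``{y} \<subseteq> X closure_of (E``{y})"
    using closure_of_subset[of "E``{x}" X] closure_of_subset[of "E``{y}" X] E_sub by auto
  moreover have "x \<in> E``{x}" "y \<in> E``{y}" using E_refl x y by auto
  ultimately show "R x y \<and> R y x" unfolding R_def by blast
next
  assume RR: "R x y \<and> R y x"
  have "E``{x} \<subseteq> X closure_of (E``{y})" using RR R_E_left unfolding R_def by blast
  moreover have "E``{y} \<subseteq> X closure_of (E``{x})" using RR R_E_left unfolding R_def by blast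
  ultimately show "X closure_of (E``{x}) = X closure_of (E``{y})"
    by (simp add: closure_of_minimal subset_antisym)
qed

lemma preimage_p_image:
  assumes U: "openin X U"
  shows "{z \<in> topspace X. p z \<in> p ` U} = E``U"
proof
  show "{z \<in> topspace X. p z \<in> p ` U} \<subseteq> E``U"
  proof clarify
    fix z u assume z: "z \<in> topspace X" "u \<in> U" "p z = p u"
    have u: "u \<in> topspace X" using U z(2) openin_subset by blast
    have "R u z" using p_eq_R[OF z(1) u] z by simp
    then show "z \<in> E``U" using R_iff[OF u] U z(2) by blast
  qed
  show "E``U \<subseteq> {z \<in> topspace X. p z \<in> p ` U}"
  proof clarify
    fix u z assume uz: "(u,z) \<in> E" "u \<in> U"
    have zu: "z \<in> topspace X" "u \<in> topspace X" using uz E_sub by auto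
    have "E``{z} = E``{u}" using uz E_sym E_trans by blast
    then have "p z = p u" by (simp add: p_def')
    then show "z \<in> topspace X \<and> p z \<in> p ` U" using zu uz by auto
  qed
qed

lemma openin_Q_image: "openin X U \<Longrightarrow> openin Q (p ` U)"
  unfolding openin_Q preimage_p_image using sat openin_subset by fastforce

lemma cont_p: "continuous_map X Q p"
  unfolding continuous_map_def openin_Q topspace_Q by auto

lemma open_p: "open_map X Q p"
  unfolding open_map_def using openin_Q_image by blast

lemma spec_p:
  assumes x: "x \<in> topspace X" and y: "y \<in> topspace X"
  shows "spec_le Q (p x) (p y) \<longleftrightarrow> R x y"
proof
  assume L: "spec_le Q (p x) (p y)"
  show "R x y" unfolding R_iff[OF x]
  proof (intro allI impI)
    fix U assume U: "openin X U \<and> x \<in> U"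
    then have "p y \<in> p ` U" using L openin_Q_image unfolding spec_le_def in_closure_of by blast
    then show "y \<in> E``U" using preimage_p_image U y by blast
  qed
next
  assume Rxy: "R x y"
  show "spec_le Q (p x) (p y)"
    unfolding spec_le_def in_closure_of topspace_Q
  proof (intro conjI allI impI)
    fix V assume V: "p x \<in> V \<and> openin Q V"
    then have "openin X {z \<in> topspace X. p z \<in> V}" by (simp add: openin_Q)
    then have "y \<in> E``{z \<in> topspace X. p z \<in> V}" using Rxy R_iff[OF x] V x by auto
    then obtain z where z: "z \<in> topspace X" "p z \<in> V" "(z,y) \<in> E" by auto
    have "E``{z} = E``{y}" using z(3) E_sym E_trans by blast
    then have "p y = p z" by (simp add: p_def')
    then show "\<exists>c. c \<in> {p y} \<and> c \<in> V" using z by auto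
  qed (use x y in auto)
qed

end


locale constr =
  fixes Uo Fc :: "nat \<Rightarrow> (nat \<Rightarrow> bool) set" and A :: "(nat \<Rightarrow> bool) set"
    and VV :: "nat list \<Rightarrow> 'b set" and \<pi> :: "(nat \<Rightarrow> bool) \<Rightarrow> 'b"
  assumes A_eq: "A = (\<Inter>n. Uo n \<union> Fc n)"
    and Uo_open: "\<And>n. openin SN (Uo n)"
    and Fc_closed: "\<And>n. closedin SN (Fc n)"
    and P1: "\<And>a L. a \<in> A \<Longrightarrow> a \<in> BB L \<Longrightarrow> \<pi> a \<in> VV L"
    and P2: "\<And>a G. a \<in> A \<Longrightarrow> \<pi> a \<in> VV G \<Longrightarrow> \<exists>K. a \<in> BB K \<and> VV K \<subseteq> VV G"
    and P3: "\<And>K F. set K \<subseteq> set F \<Longrightarrow> VV F \<subseteq> VV K"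
begin

definition relQ :: "nat \<Rightarrow> nat list \<Rightarrow> nat list \<Rightarrow> bool" where
  "relQ r F H \<longleftrightarrow> set F \<subseteq> set H \<and>
     (if even r then VV H \<subseteq> VV (list_decode (r div 2)) else BB H \<subseteq> Uo (r div 2))"

primrec seqG :: "(nat list \<Rightarrow> bool) \<Rightarrow> nat \<Rightarrow> nat list" where
  "seqG Gd 0 = []"
| "seqG Gd (Suc j) =
     (if \<exists>k. relQ (fst (prod_decode j)) (seqG Gd j) (list_decode k) \<and> Gd (list_decode k)
      then list_decode (LEAST k. relQ (fst (prod_decode j)) (seqG Gd j) (list_decode k) \<and> Gd (list_decode k))
      else seqG Gd j)"

definition limG :: "(nat list \<Rightarrow> bool) \<Rightarrow> nat \<Rightarrow> bool" where
  "limG Gd = (\<lambda>m. \<exists>j. m \<in> set (seqG Gd j))"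

lemma BB_mono: "set K \<subseteq> set F \<Longrightarrow> BB F \<subseteq> BB K"
  by (auto simp: BB_def)

lemma relQ_sub: "relQ r F H \<Longrightarrow> set F \<subseteq> set H"
  by (simp add: relQ_def)

context
  fixes Gd :: "nat list \<Rightarrow> bool"
  assumes ga: "Gd []"
    and gb: "\<And>F n. Gd F \<Longrightarrow> BB F \<inter> Fc n = {} \<Longrightarrow> \<exists>H. set F \<subseteq> set H \<and> BB H \<subseteq> Uo n \<and> Gd H"
    and gc: "\<And>F G. Gd F \<Longrightarrow> Gd G \<Longrightarrow> \<exists>H. set F \<subseteq> set H \<and> VV H \<subseteq> VV G \<and> Gd H"
    and gd: "\<And>F G. Gd F \<Longrightarrow> VV F \<subseteq> VV G \<Longrightarrow> Gd G"
begin

lemma step_rel: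
  assumes "\<exists>H. relQ (fst (prod_decode j)) (seqG Gd j) H \<and> Gd H"
  shows "relQ (fst (prod_decode j)) (seqG Gd j) (seqG Gd (Suc j)) \<and> Gd (seqG Gd (Suc j))"
proof -
  let ?P = "\<lambda>k. relQ (fst (prod_decode j)) (seqG Gd j) (list_decode k) \<and> Gd (list_decode k)"
  obtain H where "relQ (fst (prod_decode j)) (seqG Gd j) H \<and> Gd H" using assms by blast
  then have "?P (list_encode H)" by simp
  then have ex: "\<exists>k. ?P k" by blast
  have "?P (LEAST k. ?P k)" using LeastI_ex[OF ex] .
  then show ?thesis using ex by simp
qed

lemma seq_noext:
  assumes "\<not> (\<exists>k. relQ (fst (prod_decode j)) (seqG Gd j) (list_decode k) \<and> Gd (list_decode k))"
  shows "seqG Gd (Suc j) = seqG Gd j"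
  by (simp only: seqG.simps if_not_P[OF assms])

lemma seq_good: "Gd (seqG Gd j)"
proof (induction j)
  case 0 then show ?case using ga by simp
next
  case (Suc j)
  show ?case
  proof (cases "\<exists>k. relQ (fst (prod_decode j)) (seqG Gd j) (list_decode k) \<and> Gd (list_decode k)")
    case True
    then have "\<exists>H. relQ (fst (prod_decode j)) (seqG Gd j) H \<and> Gd H" by blast
    then show ?thesis using step_rel by blast
  next
    case False then show ?thesis using Suc seq_noext by simp
  qed
qed

lemma seq_suc_mono: "set (seqG Gd j) \<subseteq> set (seqG Gd (Suc j))"
proof (cases "\<exists>k. relQ (fst (prod_decode j)) (seqG Gd j) (list_decode k) \<and> Gd (list_decode k)")
  case True
  then have "\<exists>H. relQ (fst (prod_decode j)) (seqG Gd j) H \<and> Gd H" by blast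
  then show ?thesis using step_rel relQ_sub by blast
next
  case False then show ?thesis using seq_noext by simp
qed

lemma seq_mono: "i \<le> j \<Longrightarrow> set (seqG Gd i) \<subseteq> set (seqG Gd j)"
  using lift_Suc_mono_le[of "\<lambda>j. set (seqG Gd j)", OF seq_suc_mono] by blast

lemma seq_sub_lim: "limG Gd \<in> BB (seqG Gd j)"
  by (auto simp: BB_def limG_def)

lemma finite_in_seq:
  assumes "limG Gd \<in> BB K"
  shows "\<exists>j. set K \<subseteq> set (seqG Gd j)"
proof -
  have "\<forall>m\<in>set K. \<exists>j. m \<in> set (seqG Gd j)" using assms by (auto simp: BB_def limG_def)
  then obtain f where f: "\<forall>m\<in>set K. m \<in> set (seqG Gd (f m))" by metis
  define j where "j = Max (f ` set K)"
  have "set K \<subseteq> set (seqG Gd j)"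
  proof
    fix m assume m: "m \<in> set K"
    then have "f m \<le> j" by (simp add: j_def)
    then show "m \<in> set (seqG Gd j)" using seq_mono f m by blast
  qed
  then show ?thesis by blast
qed

lemma req_often: "\<exists>j\<ge>j0. fst (prod_decode j) = r"
  by (rule exI[of _ "prod_encode (r, j0)"]) (simp add: le_prod_encode_2)

lemma lim_in_A: "limG Gd \<in> A"
  unfolding A_eq
proof (rule INT_I)
  fix n
  show "limG Gd \<in> Uo n \<union> Fc n"
  proof (rule ccontr)
    assume "limG Gd \<notin> Uo n \<union> Fc n"
    then have nF: "limG Gd \<notin> Fc n" and nU: "limG Gd \<notin> Uo n" by auto
    have "openin SN (topspace SN - Fc n)" using Fc_closed by blast
    then obtain K where K: "limG Gd \<in> BB K" "BB K \<subseteq> topspace SN - Fc n"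
      using openin_SN_basic nF by fastforce
    obtain j0 where j0: "set K \<subseteq> set (seqG Gd j0)" using finite_in_seq K(1) by blast
    obtain j where j: "j \<ge> j0" "fst (prod_decode j) = 2*n+1" using req_often by blast
    have "BB (seqG Gd j) \<inter> Fc n = {}"
      using BB_mono[OF order_trans[OF j0 seq_mono[OF j(1)]]] K(2) by auto
    then obtain H where H: "set (seqG Gd j) \<subseteq> set H" "BB H \<subseteq> Uo n" "Gd H"
      using gb seq_good by blast
    have "relQ (fst (prod_decode j)) (seqG Gd j) H" using H j(2) by (simp add: relQ_def)
    then have "relQ (2*n+1) (seqG Gd j) (seqG Gd (Suc j))" using step_rel H j(2) by metis
    then have "BB (seqG Gd (Suc j)) \<subseteq> Uo n" by (simp add: relQ_def)
    then show False using seq_sub_lim nU by blast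
  qed
qed

lemma lim_good: "Gd G \<longleftrightarrow> \<pi> (limG Gd) \<in> VV G"
proof
  assume g: "Gd G"
  obtain j where j: "fst (prod_decode j) = 2 * list_encode G" using req_often by blast
  obtain H where H: "set (seqG Gd j) \<subseteq> set H" "VV H \<subseteq> VV G" "Gd H" using gc seq_good g by blast
  have "relQ (fst (prod_decode j)) (seqG Gd j) H" using H j by (simp add: relQ_def)
  then have "relQ (2 * list_encode G) (seqG Gd j) (seqG Gd (Suc j))" using step_rel H j by metis
  then have "VV (seqG Gd (Suc j)) \<subseteq> VV G" by (simp add: relQ_def)
  moreover have "\<pi> (limG Gd) \<in> VV (seqG Gd (Suc j))" using P1 lim_in_A seq_sub_lim by blast
  ultimately show "\<pi> (limG Gd) \<in> VV G" by blast
next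
  assume "\<pi> (limG Gd) \<in> VV G"
  then obtain K where K: "limG Gd \<in> BB K" "VV K \<subseteq> VV G" using P2 lim_in_A by blast
  obtain j where "set K \<subseteq> set (seqG Gd j)" using finite_in_seq K(1) by blast
  then have "VV (seqG Gd j) \<subseteq> VV G" using P3 K(2) by blast
  then show "Gd G" using gd seq_good by blast
qed

end
end


lemma pi_oc: "openin T U \<Longrightarrow> closedin T F \<Longrightarrow> Pi02_in T (topspace T \<inter> (U \<union> F))"
  unfolding Pi02_in_def by (rule exI[of _ "\<lambda>_. U"], rule exI[of _ "\<lambda>_. F"]) auto

lemma pi_INT:
  assumes "\<And>n::nat. Pi02_in T (S n)"
  shows "Pi02_in T (\<Inter>n. S n)"
proof -
  have "\<forall>n. \<exists>UF. (\<forall>m::nat. openin T (fst UF m) \<and> closedin T (snd UF m)) \<and>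
      S n = topspace T \<inter> (\<Inter>m. fst UF m \<union> snd UF m)"
  proof
    fix i
    have "\<exists>U F. (\<forall>m::nat. openin T (U m) \<and> closedin T (F m)) \<and> S i = topspace T \<inter> (\<Inter>m. U m \<union> F m)"
      using assms[of i] unfolding Pi02_in_def .
    then obtain U F where "(\<forall>m::nat. openin T (U m) \<and> closedin T (F m)) \<and> S i = topspace T \<inter> (\<Inter>m. U m \<union> F m)"
      by (elim exE)
    then show "\<exists>UF. (\<forall>m::nat. openin T (fst UF m) \<and> closedin T (snd UF m)) \<and>
      S i = topspace T \<inter> (\<Inter>m. fst UF m \<union> snd UF m)"
      by (intro exI[of _ "(U,F)"]) simp
  qed
  then obtain UF where UF0: "\<And>n. (\<forall>m::nat. openin T (fst (UF n) m) \<and> closedin T (snd (UF n) m)) \<and>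
      S n = topspace T \<inter> (\<Inter>m. fst (UF n) m \<union> snd (UF n) m)" by metis
  define U where "U n = fst (UF n)" for n
  define F where "F n = snd (UF n)" for n
  have UF: "\<And>n m. openin T (U n m) \<and> closedin T (F n m)"
    "\<And>n. S n = topspace T \<inter> (\<Inter>m. U n m \<union> F n m)"
    using UF0 by (simp_all add: U_def F_def)
  define U' where "U' k = (case prod_decode k of (n,m) \<Rightarrow> U n m)" for k
  define F' where "F' k = (case prod_decode k of (n,m) \<Rightarrow> F n m)" for k
  have "(\<Inter>n. S n) = topspace T \<inter> (\<Inter>k. U' k \<union> F' k)"
  proof (intro equalityI subsetI)
    fix x assume x: "x \<in> (\<Inter>n. S n)"
    then have "x \<in> topspace T" using UF(2) by blast
    moreover have "x \<in> U' k \<union> F' k" for k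
    proof -
      obtain n m where "prod_decode k = (n,m)" by fastforce
      then show ?thesis using x UF(2)[of n] by (auto simp: U'_def F'_def)
    qed
    ultimately show "x \<in> topspace T \<inter> (\<Inter>k. U' k \<union> F' k)" by blast
  next
    fix x assume x: "x \<in> topspace T \<inter> (\<Inter>k. U' k \<union> F' k)"
    have "x \<in> S n" for n
    proof -
      have "x \<in> U n m \<union> F n m" for m
        using x by (auto dest!: spec[of _ "prod_encode (n,m)"] simp: U'_def F'_def)
      then show ?thesis using UF(2) x by blast
    qed
    then show "x \<in> (\<Inter>n. S n)" by blast
  qed
  moreover have "openin T (U' k) \<and> closedin T (F' k)" for k
    using UF(1) by (auto simp: U'_def F'_def split: prod.split)
  ultimately show ?thesis unfolding Pi02_in_def by blast
qed

lemma pi_INT_countable: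
  fixes S :: "'c::countable \<Rightarrow> 'a set"
  assumes "\<And>x. Pi02_in T (S x)"
  shows "Pi02_in T (\<Inter>x. S x)"
proof -
  have "(\<Inter>x. S x) = (\<Inter>n. S (from_nat n))"
  proof (intro equalityI subsetI)
    fix z assume "z \<in> (\<Inter>n. S (from_nat n))"
    then have "z \<in> S (from_nat (to_nat x))" for x by blast
    then show "z \<in> (\<Inter>x. S x)" by (metis INT_I from_nat_to_nat)
  qed auto
  then show ?thesis using pi_INT assms by metis
qed

lemma pi_Int:
  assumes "Pi02_in T S1" "Pi02_in T S2"
  shows "Pi02_in T (S1 \<inter> S2)"
proof -
  have "S1 \<inter> S2 = (\<Inter>n::nat. if n = 0 then S1 else S2)"
    by (auto split: if_splits)
  then show ?thesis using pi_INT[of T "\<lambda>n. if n = 0 then S1 else S2"] assms by auto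
qed



locale main = qsetup X E for X :: "'a topology" and E +
  fixes A :: "(nat \<Rightarrow> bool) set" and Uo Fc :: "nat \<Rightarrow> (nat \<Rightarrow> bool) set"
    and h :: "'a \<Rightarrow> nat \<Rightarrow> bool" and g :: "(nat \<Rightarrow> bool) \<Rightarrow> 'a"
  assumes A_eq: "A = (\<Inter>n. Uo n \<union> Fc n)"
    and Uo_open: "\<And>n. openin SN (Uo n)"
    and Fc_closed: "\<And>n. closedin SN (Fc n)"
    and hm: "homeomorphic_maps X (subtopology SN A) h g"
begin

lemma h_cont: "continuous_map X (subtopology SN A) h"
  using hm by (simp add: homeomorphic_maps_def)
lemma h_in: "z \<in> topspace X \<Longrightarrow> h z \<in> A"
  using h_cont by (auto simp: continuous_map_def)
lemma h_cont': "continuous_map X SN h"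
  using h_cont continuous_map_from_subtopology continuous_map_in_subtopology by blast
lemma g_in: "a \<in> A \<Longrightarrow> g a \<in> topspace X"
  using hm by (auto simp: homeomorphic_maps_def continuous_map_def)
lemma gh: "z \<in> topspace X \<Longrightarrow> g (h z) = z"
  using hm by (auto simp: homeomorphic_maps_def)
lemma hg: "a \<in> A \<Longrightarrow> h (g a) = a"
  using hm by (auto simp: homeomorphic_maps_def)
lemma h_hom: "homeomorphic_map X (subtopology SN A) h"
  using hm homeomorphic_maps_map by blast

definition cX :: "nat list \<Rightarrow> 'a set" where
  "cX L = {z \<in> topspace X. h z \<in> BB L}"

lemma openin_cX: "openin X (cX L)"
  unfolding cX_def using openin_continuous_map_preimage[OF h_cont' openin_BB] .

lemma h_image_open:
  assumes "openin X W"
  obtains T where "openin SN T" "h ` W = T \<inter> A"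
proof -
  have "openin (subtopology SN A) (h ` W)"
    using homeomorphic_map_openness[OF h_hom] assms openin_subset by blast
  then show ?thesis using that unfolding openin_subtopology by blast
qed

lemma cX_basic:
  assumes W: "openin X W" and z: "z \<in> W"
  shows "\<exists>K. z \<in> cX K \<and> cX K \<subseteq> W"
proof -
  obtain T where T: "openin SN T" "h ` W = T \<inter> A" using h_image_open W by blast
  have zX: "z \<in> topspace X" using W z openin_subset by blast
  have "h z \<in> T" using T(2) z by blast
  then obtain K where K: "h z \<in> BB K" "BB K \<subseteq> T" using openin_SN_basic T(1) by blast
  have "cX K \<subseteq> W"
  proof
    fix w assume w: "w \<in> cX K"
    then have wX: "w \<in> topspace X" by (simp add: cX_def)
    then have "h w \<in> T \<inter> A" using w K h_in by (auto simp: cX_def)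
    then obtain u where u: "u \<in> W" "h w = h u" using T(2) by (metis imageE)
    have "u \<in> topspace X" using u W openin_subset by blast
    then have "w = u" using u gh wX by metis
    then show "w \<in> W" using u by simp
  qed
  then show ?thesis using K zX by (auto simp: cX_def)
qed

definition VV :: "nat list \<Rightarrow> 'a set set set" where
  "VV L = p ` cX L"

definition \<pi> :: "(nat \<Rightarrow> bool) \<Rightarrow> 'a set set" where
  "\<pi> a = p (g a)"

lemma openin_VV: "openin Q (VV L)"
  unfolding VV_def using openin_Q_image openin_cX by blast

lemma VV_sub: "VV L \<subseteq> topspace Q"
  using openin_VV openin_subset by blast

lemma VV_basic:
  assumes V: "openin Q V" and q: "q \<in> V"
  shows "\<exists>L. q \<in> VV L \<and> VV L \<subseteq> V"
proof -
  obtain z where z: "z \<in> topspace X" "q = p z" using q V openin_subset topspace_Q by blast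
  have "openin X {w \<in> topspace X. p w \<in> V}" using V by (simp add: openin_Q)
  then obtain K where K: "z \<in> cX K" "cX K \<subseteq> {w \<in> topspace X. p w \<in> V}"
    using cX_basic z q by blast
  then show ?thesis using z by (auto simp: VV_def)
qed

lemma cX_mono: "set K \<subseteq> set F \<Longrightarrow> cX F \<subseteq> cX K"
  by (auto simp: cX_def BB_def)

lemma cX_nil: "cX [] = topspace X"
  using h_in by (auto simp: cX_def BB_def)

lemma cX_append: "cX (F @ K) = cX F \<inter> cX K"
  by (auto simp: cX_def BB_def)

sublocale C: constr Uo Fc A VV \<pi>
proof
  show "A = (\<Inter>n. Uo n \<union> Fc n)" by (rule A_eq)
  show "openin SN (Uo n)" for n by (rule Uo_open)
  show "closedin SN (Fc n)" for n by (rule Fc_closed)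
  show "\<pi> a \<in> VV L" if "a \<in> A" "a \<in> BB L" for a L
    using that g_in hg by (auto simp: \<pi>_def VV_def cX_def)
  show "\<exists>K. a \<in> BB K \<and> VV K \<subseteq> VV G" if a: "a \<in> A" and pa: "\<pi> a \<in> VV G" for a G
  proof -
    have "openin X {w \<in> topspace X. p w \<in> VV G}" using openin_VV by (simp add: openin_Q)
    then obtain K where K: "g a \<in> cX K" "cX K \<subseteq> {w \<in> topspace X. p w \<in> VV G}"
      using cX_basic pa g_in a by (force simp: \<pi>_def)
    have "a \<in> BB K" using K(1) hg a by (auto simp: cX_def)
    moreover have "VV K \<subseteq> VV G" using K(2) by (auto simp: VV_def)
    ultimately show ?thesis by blast
  qed
  show "VV F \<subseteq> VV K" if "set K \<subseteq> set F" for K F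
    using cX_mono[OF that] by (auto simp: VV_def)
qed

lemma T0:
  assumes z1: "z1 \<in> topspace X" and z2: "z2 \<in> topspace X"
    and eqv: "\<And>L. p z1 \<in> VV L \<longleftrightarrow> p z2 \<in> VV L"
  shows "p z1 = p z2"
proof -
  have "R a b" if a: "a \<in> topspace X" and b: "b \<in> topspace X"
    and e: "\<And>L. p a \<in> VV L \<Longrightarrow> p b \<in> VV L" for a b
    unfolding R_iff[OF a]
  proof (intro allI impI)
    fix U assume U: "openin X U \<and> a \<in> U"
    then obtain K where K: "a \<in> cX K" "cX K \<subseteq> U" using cX_basic by blast
    have "p b \<in> VV K" using e K(1) by (auto simp: VV_def)
    then have "b \<in> E `` cX K" using preimage_p_image[OF openin_cX] b by (auto simp: VV_def)
    then show "b \<in> E `` U" using K(2) by blast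
  qed
  then show ?thesis using p_eq_R z1 z2 eqv by blast
qed

lemma good_q:
  assumes q: "q \<in> topspace Q"
  shows "q \<in> VV []"
    and "\<And>F n. q \<in> VV F \<Longrightarrow> BB F \<inter> Fc n = {} \<Longrightarrow> \<exists>H. set F \<subseteq> set H \<and> BB H \<subseteq> Uo n \<and> q \<in> VV H"
    and "\<And>F G. q \<in> VV F \<Longrightarrow> q \<in> VV G \<Longrightarrow> \<exists>H. set F \<subseteq> set H \<and> VV H \<subseteq> VV G \<and> q \<in> VV H"
    and "\<And>F G. q \<in> VV F \<Longrightarrow> VV F \<subseteq> VV G \<Longrightarrow> q \<in> VV G"
proof -
  show "q \<in> VV []" using q by (simp add: VV_def cX_nil topspace_Q)
next
  fix F n assume qF: "q \<in> VV F" and dis: "BB F \<inter> Fc n = {}"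
  then obtain z where z: "z \<in> cX F" "q = p z" by (auto simp: VV_def)
  have "h z \<in> A" "h z \<in> BB F" using z h_in by (auto simp: cX_def)
  then have "h z \<in> Uo n" using A_eq dis by blast
  then obtain K where K: "h z \<in> BB K" "BB K \<subseteq> Uo n" using openin_SN_basic Uo_open by blast
  have "BB (F @ K) \<subseteq> Uo n" using K(2) by (auto simp: BB_def)
  moreover have "q \<in> VV (F @ K)" using z K(1) by (auto simp: VV_def cX_def BB_def)
  ultimately show "\<exists>H. set F \<subseteq> set H \<and> BB H \<subseteq> Uo n \<and> q \<in> VV H" by (intro exI[of _ "F @ K"]) auto
next
  fix F G assume qF: "q \<in> VV F" and qG: "q \<in> VV G"
  then obtain z where z: "z \<in> cX F" "q = p z" by (auto simp: VV_def)
  have o: "openin X (cX F \<inter> {w \<in> topspace X. p w \<in> VV G})"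
    using openin_VV openin_cX by (simp add: openin_Q openin_Int)
  have "z \<in> cX F \<inter> {w \<in> topspace X. p w \<in> VV G}" using z qG by (auto simp: cX_def)
  then obtain K where K: "z \<in> cX K" "cX K \<subseteq> cX F \<inter> {w \<in> topspace X. p w \<in> VV G}"
    using cX_basic[OF o] by blast
  have "VV (F @ K) \<subseteq> VV G" using K(2) by (auto simp: VV_def cX_append)
  moreover have "q \<in> VV (F @ K)" using z K by (auto simp: VV_def cX_append)
  ultimately show "\<exists>H. set F \<subseteq> set H \<and> VV H \<subseteq> VV G \<and> q \<in> VV H" by (intro exI[of _ "F @ K"]) auto
next
  fix F G assume "q \<in> VV F" "VV F \<subseteq> VV G" then show "q \<in> VV G" by blast
qed

definition sel :: "'a set set \<Rightarrow> 'a" where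
  "sel q = g (C.limG (\<lambda>L. q \<in> VV L))"

lemma sel_lim_A: "q \<in> topspace Q \<Longrightarrow> C.limG (\<lambda>L. q \<in> VV L) \<in> A"
  using C.lim_in_A[of "\<lambda>L. q \<in> VV L"] good_q by blast

lemma sel_good: "q \<in> topspace Q \<Longrightarrow> q \<in> VV G \<longleftrightarrow> \<pi> (C.limG (\<lambda>L. q \<in> VV L)) \<in> VV G"
  using C.lim_good[of "\<lambda>L. q \<in> VV L"] good_q by blast

lemma sel_ok:
  assumes q: "q \<in> topspace Q"
  shows "sel q \<in> topspace X" "p (sel q) = q"
proof -
  show sX: "sel q \<in> topspace X" unfolding sel_def using g_in sel_lim_A q by blast
  obtain z where z: "z \<in> topspace X" "q = p z" using q topspace_Q by auto
  have e1: "p (sel q) = \<pi> (C.limG (\<lambda>L. q \<in> VV L))" by (simp only: sel_def \<pi>_def)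
  have "p (sel q) \<in> VV L \<longleftrightarrow> p z \<in> VV L" for L
  proof -
    have "q \<in> VV L \<longleftrightarrow> p (sel q) \<in> VV L" using sel_good[OF q, of L] e1 by simp
    then show ?thesis using z(2)[symmetric] by simp
  qed
  then have "p (sel q) = p z" by (rule T0[OF sX z(1)])
  then show "p (sel q) = q" using z(2) by simp
qed

end


lemma pi_clause:
  fixes S :: "'c set" and f :: "'c \<Rightarrow> nat"
  shows "Pi02_in SN {I. (\<forall>k\<in>set ks. I k) \<and> c \<longrightarrow> (\<exists>H\<in>S. I (f H))}"
proof -
  define Uo where "Uo = (\<Union>H\<in>S. {I::nat\<Rightarrow>bool. I (f H)})"
  define Fc where "Fc = (if c then (\<Union>k\<in>set ks. {I::nat\<Rightarrow>bool. \<not> I k}) else UNIV)"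
  have "openin SN Uo" unfolding Uo_def by (rule openin_Union) (auto intro: openin_SN_coord)
  moreover have "closedin SN Fc"
  proof (cases c)
    case True
    then show ?thesis unfolding Fc_def
      by (auto intro!: closedin_Union intro: closedin_SN_ncoord)
  next
    case False
    then show ?thesis unfolding Fc_def using closedin_topspace[of SN] by simp
  qed
  moreover have "{I. (\<forall>k\<in>set ks. I k) \<and> c \<longrightarrow> (\<exists>H\<in>S. I (f H))} = topspace SN \<inter> (Uo \<union> Fc)"
    by (auto simp: Uo_def Fc_def)
  ultimately show ?thesis using pi_oc by metis
qed

context main begin

abbreviation "M \<equiv> borel_of_top Q"

lemma opens_pow: "{U. openin Q U} \<subseteq> Pow (topspace Q)"
  using openin_subset by blast

lemma space_M: "space M = topspace Q"
  unfolding borel_of_top_def using opens_pow by (simp add: space_measure_of)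

lemma sets_M_open: "openin Q U \<Longrightarrow> U \<in> sets M"
  unfolding borel_of_top_def using opens_pow by (simp add: sets_measure_of sigma_sets.Basic)

lemma pred_VV[measurable]: "Measurable.pred M (\<lambda>q. q \<in> VV L)"
proof -
  have S: "VV L \<in> sets M" using sets_M_open openin_VV by simp
  show ?thesis using pred_sets2[OF S measurable_ident] by simp
qed

lemma step_meas:
  "(\<lambda>q. if \<exists>k. C.relQ r F (list_decode k) \<and> q \<in> VV (list_decode k)
        then list_decode (LEAST k. C.relQ r F (list_decode k) \<and> q \<in> VV (list_decode k)) else F)
     \<in> M \<rightarrow>\<^sub>M count_space UNIV"
proof (rule measurable_If)
  have "(\<lambda>q. LEAST k. C.relQ r F (list_decode k) \<and> q \<in> VV (list_decode k)) \<in> M \<rightarrow>\<^sub>M count_space UNIV"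
    by (rule measurable_Least) (auto intro: pred_intros_conj1' pred_VV)
  then show "(\<lambda>q. list_decode (LEAST k. C.relQ r F (list_decode k) \<and> q \<in> VV (list_decode k)))
     \<in> M \<rightarrow>\<^sub>M count_space UNIV"
    by (rule measurable_compose) simp
  show "(\<lambda>q. F) \<in> M \<rightarrow>\<^sub>M count_space UNIV" by simp
  show "{q \<in> space M. \<exists>k. C.relQ r F (list_decode k) \<and> q \<in> VV (list_decode k)} \<in> sets M"
    by (rule predE) (auto intro!: pred_intros_countable pred_intros_conj1' pred_VV)
qed

lemma seq_meas: "(\<lambda>q. C.seqG (\<lambda>L. q \<in> VV L) j) \<in> M \<rightarrow>\<^sub>M count_space UNIV"
proof (induction j)
  case 0 then show ?case by simp
next
  case (Suc j)
  define sf where "sf F q = (if \<exists>k. C.relQ (fst (prod_decode j)) F (list_decode k) \<and> q \<in> VV (list_decode k)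
        then list_decode (LEAST k. C.relQ (fst (prod_decode j)) F (list_decode k) \<and> q \<in> VV (list_decode k)) else F)" for F q
  have "(\<lambda>q. C.seqG (\<lambda>L. q \<in> VV L) (Suc j)) = (\<lambda>q. sf (C.seqG (\<lambda>L. q \<in> VV L) j) q)"
    by (simp add: sf_def)
  moreover have "(\<lambda>q. sf (C.seqG (\<lambda>L. q \<in> VV L) j) q) \<in> M \<rightarrow>\<^sub>M count_space UNIV"
    by (rule measurable_compose_countable'[where I=UNIV, OF _ Suc.IH])
      (auto simp: sf_def intro: step_meas)
  ultimately show ?case by simp
qed

lemma lim_pred: "Measurable.pred M (\<lambda>q. C.limG (\<lambda>L. q \<in> VV L) m)"
  unfolding C.limG_def
proof -
  have "Measurable.pred M (\<lambda>q. m \<in> set (C.seqG (\<lambda>L. q \<in> VV L) j))" for j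
    using pred_sets2[OF _ seq_meas, of "{F. m \<in> set F}" j] by simp
  then show "Measurable.pred M (\<lambda>q. \<exists>j. m \<in> set (C.seqG (\<lambda>L. q \<in> VV L) j))"
    by (rule pred_intros_countable(2))
qed

lemma sel_meas: "sel \<in> M \<rightarrow>\<^sub>M borel_of_top X"
  unfolding borel_of_top_def[of X]
proof (rule measurable_measure_of)
  show "{U. openin X U} \<subseteq> Pow (topspace X)" using openin_subset by blast
  show "sel \<in> space M \<rightarrow> topspace X" using sel_ok space_M by auto
  fix U assume "U \<in> {U. openin X U}"
  then have U: "openin X U" by simp
  obtain T where T: "openin SN T" "h ` U = T \<inter> A" using h_image_open U by blast
  define lim where "lim q = C.limG (\<lambda>L. q \<in> VV L)" for q
  have "sel -` U \<inter> space M = {q \<in> space M. \<exists>K\<in>{K. BB K \<subseteq> T}. \<forall>m\<in>set K. lim q m}"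
  proof (intro equalityI subsetI)
    fix q assume q: "q \<in> sel -` U \<inter> space M"
    then have qQ: "q \<in> topspace Q" using space_M by auto
    have aA: "lim q \<in> A" using sel_lim_A qQ by (simp add: lim_def)
    have "g (lim q) \<in> U" using q by (simp add: sel_def lim_def)
    then have "lim q \<in> T" using hg[OF aA] T(2) by (metis IntE imageI)
    then obtain K where "lim q \<in> BB K" "BB K \<subseteq> T" using openin_SN_basic T(1) by blast
    then show "q \<in> {q \<in> space M. \<exists>K\<in>{K. BB K \<subseteq> T}. \<forall>m\<in>set K. lim q m}"
      using q by (auto simp: BB_def)
  next
    fix q assume q: "q \<in> {q \<in> space M. \<exists>K\<in>{K. BB K \<subseteq> T}. \<forall>m\<in>set K. lim q m}"
    then have qQ: "q \<in> topspace Q" using space_M by auto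
    have aA: "lim q \<in> A" using sel_lim_A qQ by (simp add: lim_def)
    from q obtain K where "BB K \<subseteq> T" "lim q \<in> BB K" by (auto simp: BB_def)
    then have "lim q \<in> h ` U" using T(2) aA by blast
    then obtain u where u: "u \<in> U" "lim q = h u" by blast
    have "u \<in> topspace X" using u(1) U openin_subset by blast
    then have "g (lim q) = u" using gh u(2) by simp
    then show "q \<in> sel -` U \<inter> space M" using q u by (auto simp: sel_def lim_def)
  qed
  moreover have "{q \<in> space M. \<exists>K\<in>{K. BB K \<subseteq> T}. \<forall>m\<in>set K. lim q m} \<in> sets M"
  proof -
    have "Measurable.pred M (\<lambda>q. \<forall>m\<in>set K. lim q m)" for K
      by (rule pred_intros_countable_bounded(3)[where P="\<lambda>q m. lim q m"]) (simp add: lim_def lim_pred)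
    then have "Measurable.pred M (\<lambda>q. \<exists>K\<in>{K. BB K \<subseteq> T}. \<forall>m\<in>set K. lim q m)"
      by (rule pred_intros_countable_bounded(4)[where P="\<lambda>q K. \<forall>m\<in>set K. lim q m"])
    then show ?thesis by (rule predE)
  qed
  ultimately show "sel -` U \<inter> space M \<in> sets M" by simp
qed

end


context main begin

definition e :: "'a set set \<Rightarrow> nat \<Rightarrow> bool" where
  "e q = (\<lambda>k. q \<in> VV (list_decode k))"

definition goodI :: "(nat \<Rightarrow> bool) \<Rightarrow> bool" where
  "goodI I \<longleftrightarrow> I (list_encode []) \<and>
    (\<forall>F n. I (list_encode F) \<and> BB F \<inter> Fc n = {} \<longrightarrow> (\<exists>H. set F \<subseteq> set H \<and> BB H \<subseteq> Uo n \<and> I (list_encode H))) \<and>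
    (\<forall>F G. I (list_encode F) \<and> I (list_encode G) \<longrightarrow> (\<exists>H. set F \<subseteq> set H \<and> VV H \<subseteq> VV G \<and> I (list_encode H))) \<and>
    (\<forall>F G. I (list_encode F) \<and> VV F \<subseteq> VV G \<longrightarrow> I (list_encode G))"

lemma e_enc: "e q (list_encode L) = (q \<in> VV L)"
  by (simp add: e_def)

lemma e_good: "q \<in> topspace Q \<Longrightarrow> goodI (e q)"
  unfolding goodI_def e_enc using good_q by blast

lemma good_e:
  assumes gI: "goodI I"
  shows "\<exists>q\<in>topspace Q. e q = I"
proof -
  define Gd where "Gd L = I (list_encode L)" for L
  have h1: "Gd []" and h2: "\<And>F n. Gd F \<Longrightarrow> BB F \<inter> Fc n = {} \<Longrightarrow> \<exists>H. set F \<subseteq> set H \<and> BB H \<subseteq> Uo n \<and> Gd H"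
    and h3: "\<And>F G. Gd F \<Longrightarrow> Gd G \<Longrightarrow> \<exists>H. set F \<subseteq> set H \<and> VV H \<subseteq> VV G \<and> Gd H"
    and h4: "\<And>F G. Gd F \<Longrightarrow> VV F \<subseteq> VV G \<Longrightarrow> Gd G"
    using gI unfolding goodI_def Gd_def by blast+
  define a where "a = C.limG Gd"
  have aA: "a \<in> A" using C.lim_in_A[OF h1 h2 h3 h4] by (simp add: a_def)
  have ag: "\<And>G. Gd G \<longleftrightarrow> \<pi> a \<in> VV G" using C.lim_good[OF h1 h2 h3 h4] by (simp add: a_def)
  have "\<pi> a \<in> topspace Q" using g_in[OF aA] by (simp add: \<pi>_def topspace_Q)
  moreover have "e (\<pi> a) = I"
  proof
    fix k
    have "e (\<pi> a) k = Gd (list_decode k)" using ag by (simp add: e_def)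
    also have "\<dots> = I k" by (simp add: Gd_def)
    finally show "e (\<pi> a) k = I k" .
  qed
  ultimately show ?thesis by blast
qed

lemma e_inj: "inj_on e (topspace Q)"
proof
  fix q1 q2 assume q1: "q1 \<in> topspace Q" and q2: "q2 \<in> topspace Q" and eq: "e q1 = e q2"
  obtain z1 z2 where z: "z1 \<in> topspace X" "q1 = p z1" "z2 \<in> topspace X" "q2 = p z2"
    using q1 q2 topspace_Q by auto
  have "\<And>L. p z1 \<in> VV L \<longleftrightarrow> p z2 \<in> VV L" using eq z e_enc by metis
  then show "q1 = q2" using T0 z by blast
qed

lemma Cl_pi02: "Pi02_in SN {I. goodI I}"
proof -
  let ?C0 = "{I. (\<forall>k\<in>set []. I k) \<and> True \<longrightarrow> (\<exists>H\<in>{[]::nat list}. I (list_encode H))}"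
  let ?C1 = "\<lambda>x::nat list \<times> nat. {I. (\<forall>k\<in>set [list_encode (fst x)]. I k) \<and> BB (fst x) \<inter> Fc (snd x) = {}
      \<longrightarrow> (\<exists>H\<in>{H. set (fst x) \<subseteq> set H \<and> BB H \<subseteq> Uo (snd x)}. I (list_encode H))}"
  let ?C2 = "\<lambda>x::nat list \<times> nat list. {I. (\<forall>k\<in>set [list_encode (fst x), list_encode (snd x)]. I k) \<and> True
      \<longrightarrow> (\<exists>H\<in>{H. set (fst x) \<subseteq> set H \<and> VV H \<subseteq> VV (snd x)}. I (list_encode H))}"
  let ?C3 = "\<lambda>x::nat list \<times> nat list. {I. (\<forall>k\<in>set [list_encode (fst x)]. I k) \<and> VV (fst x) \<subseteq> VV (snd x)
      \<longrightarrow> (\<exists>H\<in>{snd x}. I (list_encode H))}"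
  have eq: "{I. goodI I} = ?C0 \<inter> (\<Inter>x. ?C1 x) \<inter> (\<Inter>x. ?C2 x) \<inter> (\<Inter>x. ?C3 x)"
    unfolding goodI_def by auto
  show ?thesis unfolding eq
    by (intro pi_Int pi_INT_countable pi_clause)
qed

lemma e_cont: "continuous_map Q SN e"
  unfolding continuous_map_componentwise_UNIV continuous_map_sierp
proof
  fix k
  have "{y \<in> topspace Q. e y k} = VV (list_decode k)" using VV_sub by (auto simp: e_def)
  then show "openin Q {y \<in> topspace Q. e y k}" using openin_VV by simp
qed

lemma e_image: "e ` topspace Q = {I. goodI I}"
  using e_good good_e by blast

lemma e_open: "open_map Q (subtopology SN {I. goodI I}) e"
  unfolding open_map_def
proof (intro allI impI)
  fix V assume V: "openin Q V"
  define T where "T = (\<Union>L\<in>{L. VV L \<subseteq> V}. {I::nat\<Rightarrow>bool. I (list_encode L)})"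
  have "openin SN T" unfolding T_def by (rule openin_Union) (auto intro: openin_SN_coord)
  moreover have "e ` V = T \<inter> {I. goodI I}"
  proof (intro equalityI subsetI)
    fix I assume "I \<in> e ` V"
    then obtain q where q: "q \<in> V" "I = e q" by blast
    have qQ: "q \<in> topspace Q" using q V openin_subset by blast
    obtain L where "q \<in> VV L" "VV L \<subseteq> V" using VV_basic V q by blast
    then show "I \<in> T \<inter> {I. goodI I}" using q qQ e_good e_enc unfolding T_def by auto
  next
    fix I assume I: "I \<in> T \<inter> {I. goodI I}"
    then obtain q where q: "q \<in> topspace Q" "e q = I" using good_e by blast
    from I obtain L where "VV L \<subseteq> V" "I (list_encode L)" unfolding T_def by blast
    then have "q \<in> V" using q e_enc by blast
    then show "I \<in> e ` V" using q by blast
  qed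
  ultimately show "openin (subtopology SN {I. goodI I}) (e ` V)"
    unfolding openin_subtopology by blast
qed

lemma Q_quasi_Polish: "quasi_Polish Q"
proof -
  have "homeomorphic_map Q (subtopology SN {I. goodI I}) e"
  proof (rule bijective_open_imp_homeomorphic_map)
    show "continuous_map Q (subtopology SN {I. goodI I}) e"
      using e_cont e_image by (auto simp: continuous_map_in_subtopology)
    show "open_map Q (subtopology SN {I. goodI I}) e" by (rule e_open)
    show "e ` topspace Q = topspace (subtopology SN {I. goodI I})" using e_image by simp
    show "inj_on e (topspace Q)" by (rule e_inj)
  qed
  then show ?thesis unfolding quasi_Polish_def
    using Cl_pi02 homeomorphic_map_imp_homeomorphic_space by blast
qed

end

theorem proposition2p1:
  fixes X :: "'a topology" and E :: "'a rel"
  assumes qP: "quasi_Polish X"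
    and eq: "equiv (topspace X) E"
    and sat: "\<And>U. openin X U \<Longrightarrow> openin X (E `` U)"
  defines "Q \<equiv> t0_equiv_quotient X E"
    and "p \<equiv> t0_equiv_proj X E"
  shows "quasi_Polish Q
    \<and> continuous_map X Q p
    \<and> open_map X Q p
    \<and> (\<forall>x\<in>topspace X. \<forall>y\<in>topspace X.
           (p x = p y \<longleftrightarrow> X closure_of (E `` {x}) = X closure_of (E `` {y})))
    \<and> (\<forall>x\<in>topspace X. \<forall>y\<in>topspace X.
           (p x = p y \<longleftrightarrow> (x \<in> X closure_of (E `` {y}) \<and> y \<in> X closure_of (E `` {x}))))
    \<and> (\<forall>x\<in>topspace X. \<forall>y\<in>topspace X.
           (spec_le Q (p x) (p y) \<longleftrightarrow> x \<in> X closure_of (E `` {y})))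
    \<and> (\<exists>s. s \<in> borel_of_top Q \<rightarrow>\<^sub>M borel_of_top X \<and> (\<forall>q\<in>topspace Q. p (s q) = q))"
  proof -
  interpret qs: qsetup X E using eq sat by unfold_locales
  obtain A' where A': "Pi02_in SN A'" "X homeomorphic_space subtopology SN A'"
    using qP unfolding quasi_Polish_def by blast
  obtain Uo Fc :: "nat \<Rightarrow> (nat \<Rightarrow> bool) set" where UF: "\<forall>n. openin SN (Uo n) \<and> closedin SN (Fc n)"
    "A' = topspace SN \<inter> (\<Inter>n. Uo n \<union> Fc n)"
    using A'(1) unfolding Pi02_in_def by blast
  obtain h g where hg: "homeomorphic_maps X (subtopology SN A') h g"
    using A'(2) unfolding homeomorphic_space_def by blast
  interpret m: main X E A' Uo Fc h g
    by unfold_locales (use UF hg in auto)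
  have s1: "quasi_Polish Q" unfolding Q_def by (rule m.Q_quasi_Polish)
  have s2: "continuous_map X Q p" unfolding Q_def p_def by (rule qs.cont_p)
  have s3: "open_map X Q p" unfolding Q_def p_def by (rule qs.open_p)
  have s4: "\<forall>x\<in>topspace X. \<forall>y\<in>topspace X.
           (p x = p y \<longleftrightarrow> X closure_of (E `` {x}) = X closure_of (E `` {y}))"
    unfolding p_def using qs.p_eq_R qs.R_closure_eq by blast
  have s5: "\<forall>x\<in>topspace X. \<forall>y\<in>topspace X.
           (p x = p y \<longleftrightarrow> (x \<in> X closure_of (E `` {y}) \<and> y \<in> X closure_of (E `` {x})))"
    unfolding p_def using qs.p_eq_R unfolding qs.R_def by blast
  have s6: "\<forall>x\<in>topspace X. \<forall>y\<in>topspace X.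
           (spec_le Q (p x) (p y) \<longleftrightarrow> x \<in> X closure_of (E `` {y}))"
    unfolding p_def Q_def using qs.spec_p unfolding qs.R_def by blast
  have s7: "\<exists>s. s \<in> borel_of_top Q \<rightarrow>\<^sub>M borel_of_top X \<and> (\<forall>q\<in>topspace Q. p (s q) = q)"
    unfolding p_def Q_def using m.sel_meas m.sel_ok by blast
  show ?thesis using s1 s2 s3 s4 s5 s6 s7 by blast
qed


end
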